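(* Let $u=s_{i_1}\cdots s_{i_l}$ and $v=s_{j_1}\cdots s_{j_m}$ ($m\ge1$) be reduced words for glides in $\hat S_n$, $v$ of offset $k_2$, such that $vu$ is reduced, and let $\alpha_1,\dots,\alpha_n\in\mathbb R$ satisfy $\alpha_i<\alpha_j$ whenever $i\triangleleft j$ in the wiring diagram of $v|u$. Let $\tilde v=\rho^{-k_2}(v)$ with reduced word $s_{j_1-k_2}\cdots s_{j_m-k_2}$. Let $b>c$ be real numbers in the same connected component of $\mathbb R\setminus\{\alpha_1,\dots,\alpha_n\}$ with $f(b)=f(c)$, where $f(t)=\prod_{j=1}^n(t-\alpha_j)$, and put $B_j=\frac{b-\alpha_j}{c-\alpha_j}$. If $(t'_1,\dots,t'_n)$ is a representative of $t(\tilde v)$, then $$t'_1\log B_1+\dots+t'_n\log B_n<0.$$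
   Context: $\hat S_n$: generators $s_0,\dots,s_{n-1}$ (indices mod $n$), relations $s_i^2=1$, $s_is_js_i=s_js_is_j$ if $i-j\equiv\pm1$, $s_is_j=s_js_i$ if $i-j\not\equiv0,\pm1$; $\rho$ is the automorphism $s_i\mapsto s_{i+1}$. $\phi:\hat S_n\to S_n$, $s_i\mapsto(i\ i+1)$, $s_0\mapsto(1\ n)$; a glide of offset $k$ is $g$ with $\phi(g)(j)\equiv j+k\pmod n$. Wiring diagram: letters drawn left to right on a cylinder with wires in positions $1,\dots,n$ (mod $n$), $s_i$ a crossing of positions $i,i+1$ ($s_0$: $n$ and $1$); the upper wire of $s_i$ passes from position $i+1$ to $i$ (for $s_0$ from $1$ to $n$). In the diagram of $v|u$, wire $i$ is the wire in position $i$ at the cut between $v$ and $u$, and $i\triangleleft j$ means wires $i,j$ cross with $j$ the upper wire. Trajectory of a glide $g$ with a reduced word: lift the diagram of $|g$ to the universal cover (integer positions, wires labelled by starting position); a chamber with set $S$ of underlying wire labels has label $(\mathbf s_i)$, $\mathbf s_i=\lceil\max\{b\in S:b\equiv i\bmod n\}/n\rceil$; $t(g)\in\mathbb Z^n/\mathbb Z(1,\dots,1)$ is the label of the chamber directly above wire $1$ at the right end minus that at the left end. *)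

theory Defs
  imports "HOL-Analysis.Analysis"
begin

text \<open>Periodic transposition of integer positions realising the generator s_i
  (it exchanges positions p and p+1 for every p congruent to i mod n).
  The group element of a word is the corresponding affine permutation of the integers.\<close>
definition sw :: "nat \<Rightarrow> nat \<Rightarrow> int \<Rightarrow> int" where
  "sw n i p = (if p mod int n = int i mod int n then p + 1
               else if p mod int n = (int i + 1) mod int n then p - 1 else p)"

definition word_perm :: "nat \<Rightarrow> nat list \<Rightarrow> int \<Rightarrow> int" where
  "word_perm n ws = foldr (\<lambda>i f. sw n i \<circ> f) ws id"

definition is_word :: "nat \<Rightarrow> nat list \<Rightarrow> bool" where
  "is_word n ws \<longleftrightarrow> set ws \<subseteq> {..<n}"

definition reduced :: "nat \<Rightarrow> nat list \<Rightarrow> bool" where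
  "reduced n ws \<longleftrightarrow> is_word n ws \<and>
     (\<forall>ws'. is_word n ws' \<and> word_perm n ws' = word_perm n ws \<longrightarrow> length ws \<le> length ws')"

definition tr :: "nat \<Rightarrow> nat \<Rightarrow> nat \<Rightarrow> nat" where
  "tr a b x = (if x = a then b else if x = b then a else x)"

definition phi_gen :: "nat \<Rightarrow> nat \<Rightarrow> nat \<Rightarrow> nat" where
  "phi_gen n i = (if i = 0 then tr 1 n else tr i (i + 1))"

definition phi :: "nat \<Rightarrow> nat list \<Rightarrow> nat \<Rightarrow> nat" where
  "phi n ws = foldr (\<lambda>i f. phi_gen n i \<circ> f) ws id"

definition glide :: "nat \<Rightarrow> nat list \<Rightarrow> int \<Rightarrow> bool" where
  "glide n ws k \<longleftrightarrow> (\<forall>j\<in>{1..n}. int (phi n ws j) mod int n = (int j + k) mod int n)"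

definition rho_shift :: "nat \<Rightarrow> int \<Rightarrow> nat list \<Rightarrow> nat list" where
  "rho_shift n k ws = map (\<lambda>j. nat ((int j - k) mod int n)) ws"

text \<open>Arrangement in the universal cover after the first t letters of a diagram whose
  left end has the identity arrangement: maps a position to the label of the wire there.\<close>
definition arr :: "nat \<Rightarrow> nat list \<Rightarrow> nat \<Rightarrow> int \<Rightarrow> int" where
  "arr n ws t = foldl (\<lambda>f i. f \<circ> sw n i) id (take t ws)"

text \<open>Arrangement of the diagram of v|u after the first t letters of v@u, wires labelled
  by their position at the cut between v and u.\<close>
definition cut_arr :: "nat \<Rightarrow> nat list \<Rightarrow> nat list \<Rightarrow> nat \<Rightarrow> int \<Rightarrow> int" where
  "cut_arr n v u t = arr n (rev v) (length v) \<circ> arr n (v @ u) t"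

definition cyl :: "nat \<Rightarrow> int \<Rightarrow> nat" where
  "cyl n x = nat ((x - 1) mod int n + 1)"

text \<open>i \<triangleleft> j in the wiring diagram of v|u: wires i and j cross, j being the upper wire.\<close>
definition lessdot :: "nat \<Rightarrow> nat list \<Rightarrow> nat list \<Rightarrow> nat \<Rightarrow> nat \<Rightarrow> bool" where
  "lessdot n v u i j \<longleftrightarrow> (\<exists>t < length (v @ u). \<exists>k::int.
      cyl n (cut_arr n v u t (int ((v @ u) ! t) + k * int n)) = i \<and>
      cyl n (cut_arr n v u t (int ((v @ u) ! t) + k * int n + 1)) = j)"

text \<open>Label of a chamber with set S of underlying wire labels.\<close>
definition chamber_label :: "nat \<Rightarrow> int set \<Rightarrow> nat \<Rightarrow> int" where
  "chamber_label n S i =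
     ceiling (real_of_int (GREATEST b. b \<in> S \<and> b mod int n = int i mod int n) / real n)"

text \<open>Trajectory t(g) (a representative, indexed by 1..n): label of the chamber directly above
  wire 1 at the right end minus the one at the left end, in the diagram of |g.\<close>
definition traj :: "nat \<Rightarrow> nat list \<Rightarrow> nat \<Rightarrow> int" where
  "traj n g i =
     (let A = arr n g (length g); q = (THE q. A q = 1)
      in chamber_label n (A ` {..q}) i - chamber_label n {..1} i)"

end

theory Submission
  imports Defs
begin

definition lpos :: "nat \<Rightarrow> nat list \<Rightarrow> int \<Rightarrow> int" where
  "lpos n ws = foldl (\<lambda>f i. f \<circ> sw n i) id ws"
definition rpos :: "nat \<Rightarrow> nat list \<Rightarrow> int \<Rightarrow> int" where
  "rpos n ws = foldl (\<lambda>f i. sw n i \<circ> f) id ws"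

lemma foldl_l_gen: "foldl (\<lambda>f i. f \<circ> sw n i) (h::int\<Rightarrow>int) ws = h \<circ> lpos n ws"
proof (induction ws arbitrary: h)
  case Nil then show ?case by (simp add: lpos_def)
next
  case (Cons x ws)
  have 1: "foldl (\<lambda>f i. f \<circ> sw n i) h (x # ws) = (h \<circ> sw n x) \<circ> lpos n ws"
    using Cons.IH[of "h \<circ> sw n x"] by (simp only: foldl_Cons)
  have "lpos n (x # ws) = foldl (\<lambda>f i. f \<circ> sw n i) (sw n x) ws"
    by (simp only: lpos_def foldl_Cons id_comp)
  hence 2: "lpos n (x # ws) = sw n x \<circ> lpos n ws" using Cons.IH[of "sw n x"] by (simp only:)
  show ?case unfolding 1 2 by (simp only: comp_assoc)
qed

lemma lpos_Nil[simp]: "lpos n [] = id" by (simp add: lpos_def)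
lemma rpos_Nil[simp]: "rpos n [] = id" by (simp add: rpos_def)
lemma lpos_Cons: "lpos n (x # ws) = sw n x \<circ> lpos n ws"
  using foldl_l_gen[of n "sw n x" ws] by (simp add: lpos_def)
lemma lpos_snoc: "lpos n (ws @ [x]) = lpos n ws \<circ> sw n x" by (simp add: lpos_def)
lemma rpos_snoc: "rpos n (ws @ [x]) = sw n x \<circ> rpos n ws" by (simp add: rpos_def)
lemma arr_eq: "arr n ws t = lpos n (take t ws)" by (simp add: arr_def lpos_def)
lemma lpos_rev: "lpos n (rev ws) = rpos n ws"
  by (induction ws rule: rev_induct) (simp_all add: lpos_Cons rpos_snoc)

lemma sw_sw: assumes "n \<ge> 2" shows "sw n i (sw n i p) = p"
proof -
  have ne: "(a + 1) mod int n \<noteq> a mod int n" for a :: int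
  proof
    assume "(a + 1) mod int n = a mod int n"
    then have "int n dvd 1" by (metis add_diff_cancel_left' mod_eq_dvd_iff add.commute)
    with assms show False by simp
  qed
  have ne2: "(a - 1) mod int n \<noteq> a mod int n" for a :: int
    using ne[of "a - 1"] by simp
  show ?thesis
  proof (cases "p mod int n = int i mod int n")
    case True
    have a: "(p + 1) mod int n = (int i + 1) mod int n" using True by (rule mod_add_cong) simp
    have b: "(p + 1) mod int n \<noteq> int i mod int n" using ne[of p] True by simp
    show ?thesis using True a b by (simp add: sw_def)
  next
    case F: False
    show ?thesis
    proof (cases "p mod int n = (int i + 1) mod int n")
      case True
      have a: "(p - 1) mod int n = (int i + 1 - 1) mod int n" using True by (rule mod_diff_cong) simp
      show ?thesis using True F a by (simp add: sw_def)
    next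
      case False
      then show ?thesis using F by (simp add: sw_def)
    qed
  qed
qed

lemma lr_inv: assumes "n \<ge> 2" shows "lpos n ws (rpos n ws p) = p"
  using assms by (induction ws arbitrary: p rule: rev_induct) (simp_all add: lpos_snoc rpos_snoc sw_sw)

lemma rl_inv: assumes "n \<ge> 2" shows "rpos n ws (lpos n ws p) = p"
  using assms by (induction ws arbitrary: p rule: rev_induct) (simp_all add: lpos_snoc rpos_snoc sw_sw)

lemma sw_per: "sw n i (p + j * int n) = sw n i p + j * int n"
  by (simp add: sw_def)

lemma lpos_per: "lpos n ws (p + j * int n) = lpos n ws p + j * int n"
  by (induction ws arbitrary: p) (simp_all add: lpos_Cons sw_per)

lemma word_perm_eq: "word_perm n ws = lpos n ws"
  by (induction ws) (simp_all add: word_perm_def lpos_Cons)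

lemma sw_step:
  assumes "p < p'" "sw n i p' < sw n i p"
  shows "p' = p + 1 \<and> p mod int n = int i mod int n"
  using assms by (auto simp: sw_def split: if_splits)

lemma ivt_nat:
  fixes F :: "nat \<Rightarrow> int"
  assumes "F t0 < 0" "0 < F t1" "t0 < t1" "\<And>t. F t \<noteq> 0"
  shows "\<exists>t. t0 \<le> t \<and> t < t1 \<and> F t < 0 \<and> 0 < F (Suc t)"
  using assms
proof (induction t1)
  case 0 then show ?case by simp
next
  case (Suc t1)
  show ?case
  proof (cases "F t1 < 0")
    case True then show ?thesis using Suc.prems by (intro exI[of _ t1]) auto
  next
    case False
    then have "0 < F t1" using Suc.prems(4)[of t1] by linarith
    moreover have "t0 < t1" using Suc.prems False by (metis less_Suc_eq)
    ultimately obtain t where "t0 \<le> t \<and> t < t1 \<and> F t < 0 \<and> 0 < F (Suc t)"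
      using Suc.IH Suc.prems by blast
    then show ?thesis by (intro exI[of _ t]) auto
  qed
qed

lemma sw_mod_cong: "a mod int n = b mod int n \<Longrightarrow> sw n i a mod int n = sw n i b mod int n"
  unfolding sw_def by (auto intro: mod_add_cong mod_diff_cong)

lemma int_mod_1n: "j \<in> {1..n} \<Longrightarrow> int j mod int n = (if j = n then 0 else int j)"
  by auto

lemma phi_gen_sw:
  assumes "n \<ge> 2" "i < n" "j \<in> {1..n}"
  shows "phi_gen n i j \<in> {1..n} \<and> int (phi_gen n i j) mod int n = sw n i (int j) mod int n"
proof -
  have jm: "int j mod int n = (if j = n then 0 else int j)" using assms(3) by auto
  have im: "int i mod int n = int i" using assms(2) by simp
  have i1m: "(int i + 1) mod int n = (if i + 1 = n then 0 else int i + 1)"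
  proof (cases "i + 1 = n")
    case True
    then have e: "int i + 1 = int n" by simp
    show ?thesis unfolding e using True by simp
  next
    case False
    then show ?thesis using assms(2) by simp
  qed
  have nm: "int n mod int n = 0" by simp
  have n1m: "(int n + 1) mod int n = 1" using assms(1) by simp
  show ?thesis
    using assms jm im i1m nm n1m
    by (auto simp: phi_gen_def tr_def sw_def)
qed

lemma phi_Cons: "phi n (x # ws) = phi_gen n x \<circ> phi n ws"
  by (simp add: phi_def)

lemma phi_lpos:
  assumes "n \<ge> 2" "set ws \<subseteq> {..<n}" "j \<in> {1..n}"
  shows "phi n ws j \<in> {1..n} \<and> int (phi n ws j) mod int n = lpos n ws (int j) mod int n"
  using assms(2)
proof (induction ws)
  case Nil then show ?case using assms(3) by (simp add: phi_def)
next
  case (Cons x ws)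
  then have IH: "phi n ws j \<in> {1..n}" "int (phi n ws j) mod int n = lpos n ws (int j) mod int n"
    and x: "x < n" by auto
  show ?case
    using phi_gen_sw[OF assms(1) x IH(1)] sw_mod_cong[OF IH(2), of i for i]
    by (simp add: phi_Cons lpos_Cons)
qed

lemma glide_lpos:
  assumes "n \<ge> 2" "is_word n ws" "glide n ws k"
  shows "lpos n ws p mod int n = (p + k) mod int n"
proof -
  define j where "j = nat ((p - 1) mod int n + 1)"
  have b1: "0 \<le> (p - 1) mod int n" "(p - 1) mod int n < int n" using assms(1) by simp_all
  have j: "j \<in> {1..n}" using b1 unfolding j_def by auto
  have ij: "int j = (p - 1) mod int n + 1" using assms(1) unfolding j_def by simp
  have pj: "p = int j + ((p - 1) div int n) * int n" using ij by (simp add: mod_div_mult_eq[symmetric] algebra_simps)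
  have "lpos n ws p = lpos n ws (int j) + ((p - 1) div int n) * int n"
    using lpos_per pj by metis
  then have "lpos n ws p mod int n = lpos n ws (int j) mod int n" by simp
  also have "\<dots> = int (phi n ws j) mod int n"
    using phi_lpos[OF assms(1) _ j] assms(2) by (simp add: is_word_def)
  also have "\<dots> = (int j + k) mod int n" using assms(3) j by (simp add: glide_def)
  also have "\<dots> = (p + k) mod int n"
  proof -
    have "p + k = (int j + k) + ((p - 1) div int n) * int n" using pj by simp
    then show ?thesis by (metis mod_mult_self1)
  qed
  finally show ?thesis .
qed

lemma mod_shift_iff: "((a::int) mod m = b mod m) \<longleftrightarrow> ((a + k) mod m = (b + k) mod m)"
  by (simp add: mod_eq_dvd_iff)

lemma sw_rho:
  assumes "n > 0"
  shows "sw n (nat ((int j - k) mod int n)) p = sw n j (p + k) - k"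
proof -
  have r: "int (nat ((int j - k) mod int n)) = (int j - k) mod int n" using assms by simp
  have c1: "(p mod int n = (int j - k) mod int n) \<longleftrightarrow> ((p + k) mod int n = int j mod int n)"
    using mod_shift_iff[of p "int n" "int j - k" k] by simp
  have c2: "(p mod int n = ((int j - k) mod int n + 1) mod int n) \<longleftrightarrow> ((p + k) mod int n = (int j + 1) mod int n)"
    using mod_shift_iff[of p "int n" "int j - k + 1" k] by (simp add: mod_add_left_eq)
  show ?thesis unfolding sw_def r using c1 c2 by simp
qed

lemma lpos_rho:
  assumes "n > 0"
  shows "lpos n (rho_shift n k ws) p = lpos n ws (p + k) - k"
proof (induction ws arbitrary: p)
  case Nil then show ?case by (simp add: rho_shift_def)
next
  case (Cons x ws)
  have "lpos n (rho_shift n k (x # ws)) p = sw n (nat ((int x - k) mod int n)) (lpos n (rho_shift n k ws) p)"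
    by (simp add: rho_shift_def lpos_Cons)
  also have "\<dots> = sw n x (lpos n ws (p + k) - k + k) - k" using Cons.IH sw_rho[OF assms] by simp
  also have "\<dots> = lpos n (x # ws) (p + k) - k" by (simp add: lpos_Cons)
  finally show ?case .
qed

lemma cross:
  assumes n2: "n \<ge> 2" and t01: "t0 < t1" "t1 \<le> length v"
    and before: "rpos n (take t0 v) l1 < rpos n (take t0 v) l2"
    and after: "rpos n (take t1 v) l2 < rpos n (take t1 v) l1"
  shows "lessdot n v u (cyl n (rpos n v l1)) (cyl n (rpos n v l2))"
proof -
  define F where "F t = rpos n (take t v) l1 - rpos n (take t v) l2" for t
  have l12: "l1 \<noteq> l2" using before by auto
  have Fne: "F t \<noteq> 0" for t
  proof
    assume "F t = 0"
    then have "rpos n (take t v) l1 = rpos n (take t v) l2" by (simp add: F_def)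
    then have "lpos n (take t v) (rpos n (take t v) l1) = lpos n (take t v) (rpos n (take t v) l2)" by simp
    then show False using lr_inv[OF n2] l12 by simp
  qed
  obtain t where t: "t0 \<le> t" "t < t1" "F t < 0" "0 < F (Suc t)"
    using ivt_nat[of F t0 t1] Fne before after t01 by (auto simp: F_def)
  have tv: "t < length v" using t t01 by simp
  have tk: "take (Suc t) v = take t v @ [v ! t]" using tv by (simp add: take_Suc_conv_app_nth)
  define p where "p = rpos n (take t v) l1"
  define p' where "p' = rpos n (take t v) l2"
  have "p < p'" using t(3) by (simp add: F_def p_def p'_def)
  moreover have "sw n (v ! t) p' < sw n (v ! t) p" using t(4) by (simp add: F_def p_def p'_def tk rpos_snoc)
  ultimately have st: "p' = p + 1" "p mod int n = int (v ! t) mod int n" using sw_step by blast+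
  define kk where "kk = (p - int (v ! t)) div int n"
  have pk: "p = int (v ! t) + kk * int n"
  proof -
    have "int n dvd (p - int (v ! t))" using st(2) by (simp add: mod_eq_dvd_iff)
    then show ?thesis unfolding kk_def by auto
  qed
  have ca: "cut_arr n v u t x = rpos n v (lpos n (take t v) x)" for x
    using tv by (simp add: cut_arr_def arr_eq lpos_rev)
  have e1: "int ((v @ u) ! t) + kk * int n = rpos n (take t v) l1"
    using tv pk by (simp add: nth_append p_def)
  have e2: "int ((v @ u) ! t) + kk * int n + 1 = rpos n (take t v) l2"
    using e1 st(1) by (simp add: p_def p'_def)
  have "cyl n (cut_arr n v u t (int ((v @ u) ! t) + kk * int n)) = cyl n (rpos n v l1)"
    by (simp only: e1 ca lr_inv[OF n2])
  moreover have "cyl n (cut_arr n v u t (int ((v @ u) ! t) + kk * int n + 1)) = cyl n (rpos n v l2)"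
    by (simp only: e2 ca lr_inv[OF n2])
  ultimately show ?thesis unfolding lessdot_def using tv by (intro exI[of _ t]) auto
qed

lemma cl_aff:
  assumes n0: "n > 0" and per: "\<And>p j. A (p + j * int n) = A p + j * int n"
    and md: "\<And>p. A p mod int n = (p + s) mod int n"
  shows "chamber_label n (A ` {..q}) i = ceiling (real_of_int (A (q - (q - int i + s) mod int n)) / real n)"
proof -
  define c where "c = q - (q - int i + s) mod int n"
  have c1: "c \<le> q" "q < c + int n" using n0 by (simp_all add: c_def)
  have cm: "(c + s) mod int n = int i mod int n"
  proof -
    have "int n dvd ((q - int i + s) - (q - int i + s) mod int n)" by (simp add: mod_eq_dvd_iff)
    then have "int n dvd ((c + s) - int i)" by (simp add: c_def algebra_simps)
    then show ?thesis by (simp add: mod_eq_dvd_iff)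
  qed
  have "(GREATEST b. b \<in> A ` {..q} \<and> b mod int n = int i mod int n) = A c"
  proof (rule Greatest_equality)
    show "A c \<in> A ` {..q} \<and> A c mod int n = int i mod int n" using c1 md cm by auto
  next
    fix y assume "y \<in> A ` {..q} \<and> y mod int n = int i mod int n"
    then obtain p where p: "p \<le> q" "y = A p" "A p mod int n = int i mod int n" by auto
    then have "(p + s) mod int n = (c + s) mod int n" using md cm by simp
    then have "int n dvd (p - c)" by (simp add: mod_eq_dvd_iff)
    then obtain z where z: "p - c = int n * z" by (auto elim: dvdE)
    have lt: "int n * z < int n" using z p(1) c1(2) by linarith
    have "\<not> z \<ge> 1"
    proof
      assume "z \<ge> 1"
      then have "int n * 1 \<le> int n * z" by (intro mult_left_mono) simp_all
      then show False using lt by simp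
    qed
    then have "z \<le> 0" by simp
    have "A p = A (c + z * int n)" using z by (simp add: algebra_simps)
    also have "\<dots> = A c + z * int n" by (rule per)
    finally show "y \<le> A c" using p(2) \<open>z \<le> 0\<close> n0 by (simp add: mult_nonpos_nonneg)
  qed
  then show ?thesis by (simp add: chamber_label_def c_def)
qed

lemma traj_formula:
  assumes n2: "n \<ge> 2" and w: "is_word n v" and g: "glide n v k" and i: "i \<in> {1..n}"
  shows "int n * traj n (rho_shift n k v) i
         = lpos n v (rpos n v (1 + k) - (1 - int i) mod int n) - (1 + k) + (1 - int i) mod int n"
proof -
  have n0: "n > 0" using n2 by simp
  define P where "P = lpos n v"
  define e where "e = rpos n v (1 + k)"
  define A where "A p = P (p + k) - k" for p
  define q where "q = e - k"
  define r where "r = (1 - int i) mod int n"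
  have Aeq: "arr n (rho_shift n k v) (length (rho_shift n k v)) = A"
    by (rule ext) (simp add: arr_eq lpos_rho[OF n0] A_def P_def)
  have Pe: "P e = 1 + k" using lr_inv[OF n2] by (simp add: P_def e_def)
  have the: "(THE q. A q = 1) = q"
  proof (rule the_equality)
    show "A q = 1" using Pe by (simp add: A_def q_def)
  next
    fix q' assume "A q' = 1"
    then have "P (q' + k) = 1 + k" by (simp add: A_def)
    then have "rpos n v (P (q' + k)) = e" by (simp add: e_def)
    then show "q' = q" using rl_inv[OF n2] by (simp add: P_def q_def)
  qed
  have Aper: "A (p + j * int n) = A p + j * int n" for p j
  proof -
    have "P (p + j * int n + k) = P ((p + k) + j * int n)" by (simp add: algebra_simps)
    also have "\<dots> = P (p + k) + j * int n" by (simp add: P_def lpos_per)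
    finally show ?thesis by (simp add: A_def)
  qed
  have Pmod: "P p mod int n = (p + k) mod int n" for p
    using glide_lpos[OF n2 w g] by (simp add: P_def)
  have Amod: "A p mod int n = (p + k) mod int n" for p
  proof -
    have "P (p + k) mod int n = (p + k + k) mod int n" by (rule Pmod)
    then have "(P (p + k) - k) mod int n = (p + k + k - k) mod int n" by (rule mod_diff_cong) simp
    then show ?thesis by (simp add: A_def add.commute)
  qed
  have em: "e mod int n = 1 mod int n"
  proof -
    have "(e + k) mod int n = (1 + k) mod int n" using Pmod[of e] Pe by simp
    then show ?thesis using mod_shift_iff[of e "int n" 1 k] by simp
  qed
  have cl1: "chamber_label n (A ` {..q}) i = ceiling (real_of_int (A (q - (q - int i + k) mod int n)) / real n)"
    by (rule cl_aff[OF n0 Aper Amod])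
  have cl2: "chamber_label n {..1} i = ceiling (real_of_int (1 - (1 - int i + 0) mod int n) / real n)"
  proof -
    have "chamber_label n (id ` {..1}) i = ceiling (real_of_int (id (1 - (1 - int i + 0) mod int n)) / real n)"
      by (rule cl_aff[OF n0]) simp_all
    then show ?thesis by simp
  qed
  have r1: "(q - int i + k) mod int n = r"
  proof -
    have "(e - int i) mod int n = (1 - int i) mod int n" using em by (rule mod_diff_cong) simp
    then show ?thesis by (simp add: q_def r_def)
  qed
  define X where "X = A (q - r)"
  have Xm: "X mod int n = (1 - r) mod int n"
  proof -
    have "X mod int n = (e - r) mod int n" by (simp add: X_def Amod q_def)
    also have "\<dots> = (1 - r) mod int n" using em by (rule mod_diff_cong) simp
    finally show ?thesis .
  qed
  then have "int n dvd (X - (1 - r))" by (simp add: mod_eq_dvd_iff)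
  then obtain B where B: "X - (1 - r) = int n * B" by (auto elim: dvdE)
  have "real_of_int X / real n = real_of_int (1 - r) / real n + of_int B"
  proof -
    have "real_of_int X = real_of_int (1 - r) + real n * of_int B"
      using B by (metis add_diff_cancel_left' diff_add_cancel of_int_add of_int_mult of_int_of_nat_eq)
    then show ?thesis using n0 by (simp add: field_simps)
  qed
  then have "ceiling (real_of_int X / real n) = ceiling (real_of_int (1 - r) / real n) + B" by simp
  then have tr: "traj n (rho_shift n k v) i = B"
    unfolding traj_def Let_def Aeq the cl1 cl2 r1 using r_def X_def by simp
  show ?thesis using B tr by (simp add: X_def A_def q_def P_def e_def r_def algebra_simps)
qed

lemma mod_succ_ne: assumes "n \<ge> 2" shows "((a::int) + 1) mod int n \<noteq> a mod int n"
proof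
  assume "(a + 1) mod int n = a mod int n"
  then have "int n dvd 1" by (metis add_diff_cancel_left' mod_eq_dvd_iff add.commute)
  with assms show False by simp
qed

lemma cyl_eq: assumes "i \<in> {1..n}" "x mod int n = int i mod int n" shows "cyl n x = i"
proof -
  have "(x - 1) mod int n = (int i - 1) mod int n" using assms(2) by (rule mod_diff_cong) simp
  also have "\<dots> = int i - 1" using assms(1) by simp
  finally show ?thesis by (simp add: cyl_def)
qed

lemma cyl_range: assumes "n > 0" shows "cyl n x \<in> {1..n}"
proof -
  have "0 \<le> (x - 1) mod int n" "(x - 1) mod int n < int n" using assms by simp_all
  then show ?thesis by (auto simp: cyl_def)
qed

lemma cyl_per: "cyl n (x + int n) = cyl n x"
proof -
  have e: "x + int n - 1 = (x - 1) + int n" by simp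
  show ?thesis unfolding cyl_def e mod_add_self2 ..
qed

lemma cross_full:
  assumes n2: "n \<ge> 2" and m: "length v \<ge> 1" and c: "c2 < c1" "lpos n v c1 < lpos n v c2"
  shows "lessdot n v u (cyl n c1) (cyl n c2)"
proof -
  have "lessdot n v u (cyl n (rpos n v (lpos n v c1))) (cyl n (rpos n v (lpos n v c2)))"
    by (rule cross[OF n2, of 0 "length v"]) (use m c rl_inv[OF n2] in auto)
  then show ?thesis using rl_inv[OF n2] by simp
qed

lemma Bprime:
  assumes n2: "n \<ge> 2" and w: "is_word n v" and g: "glide n v k" and m: "length v \<ge> 1"
    and i: "i \<in> {1..n}" and j: "j \<in> {1..n}"
    and lt: "traj n (rho_shift n k v) j < traj n (rho_shift n k v) i"
  shows "lessdot n v u j i"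
proof -
  have n0: "n > 0" using n2 by simp
  define P where "P = lpos n v"
  define e where "e = rpos n v (1 + k)"
  define ri where "ri = (1 - int i) mod int n"
  define rj where "rj = (1 - int j) mod int n"
  define Ti where "Ti = traj n (rho_shift n k v) i"
  define Tj where "Tj = traj n (rho_shift n k v) j"
  have Fi: "int n * Ti = P (e - ri) - (1 + k) + ri"
    using traj_formula[OF n2 w g i] by (simp add: Ti_def P_def e_def ri_def)
  have Fj: "int n * Tj = P (e - rj) - (1 + k) + rj"
    using traj_formula[OF n2 w g j] by (simp add: Tj_def P_def e_def rj_def)
  have rb: "0 \<le> ri" "ri < int n" "0 \<le> rj" "rj < int n" using n0 by (simp_all add: ri_def rj_def)
  have "Ti \<ge> Tj + 1" using lt by (simp add: Ti_def Tj_def)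
  then have big: "int n * Ti \<ge> int n * Tj + int n"
    using mult_left_mono[of "Tj + 1" Ti "int n"] by (simp add: algebra_simps)
  have Pe: "P e = 1 + k" using lr_inv[OF n2] by (simp add: P_def e_def)
  have em: "e mod int n = 1 mod int n"
  proof -
    have "P e mod int n = (e + k) mod int n" using glide_lpos[OF n2 w g] by (simp add: P_def)
    then have "(e + k) mod int n = (1 + k) mod int n" using Pe by simp
    then show ?thesis using mod_shift_iff[of e "int n" 1 k] by simp
  qed
  have cyl_i: "cyl n (e - ri) = i"
  proof (rule cyl_eq[OF i])
    have "(e - ri) mod int n = (1 - (1 - int i)) mod int n"
      using em by (rule mod_diff_cong) (simp add: ri_def)
    then show "(e - ri) mod int n = int i mod int n" by simp
  qed
  have cyl_j: "cyl n (e - rj) = j"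
  proof (rule cyl_eq[OF j])
    have "(e - rj) mod int n = (1 - (1 - int j)) mod int n"
      using em by (rule mod_diff_cong) (simp add: rj_def)
    then show "(e - rj) mod int n = int j mod int n" by simp
  qed
  have "ri \<noteq> rj"
  proof
    assume "ri = rj"
    then have "int n * Ti = int n * Tj" using Fi Fj by simp
    then show False using lt n0 by (simp add: Ti_def Tj_def)
  qed
  then consider "rj < ri" | "ri < rj" by linarith
  then show ?thesis
  proof cases
    case 1
    have "lessdot n v u (cyl n (e - rj)) (cyl n (e - ri))"
      by (rule cross_full[OF n2 m]) (use 1 Fi Fj big rb in \<open>simp_all add: P_def\<close>)
    then show ?thesis using cyl_i cyl_j by simp
  next
    case 2
    have per: "P (e - rj + 1 * int n) = P (e - rj) + 1 * int n" by (simp only: P_def lpos_per)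
    have "lessdot n v u (cyl n (e - rj + 1 * int n)) (cyl n (e - ri))"
      by (rule cross_full[OF n2 m]) (use 2 Fi Fj big rb per in \<open>simp_all add: P_def\<close>)
    moreover have "cyl n (e - rj + 1 * int n) = j"
      using cyl_j cyl_per by simp
    ultimately show ?thesis using cyl_i by simp
  qed
qed

lemma Aprime:
  assumes n2: "n \<ge> 2" and w: "is_word n v" and g: "glide n v k" and m: "length v \<ge> 1"
    and const: "\<And>i. i \<in> {1..n} \<Longrightarrow> traj n (rho_shift n k v) i = traj n (rho_shift n k v) 1"
  shows "\<exists>a\<in>{1..n}. \<exists>b\<in>{1..n}. lessdot n v u a b \<and> lessdot n v u b a"
proof -
  have n0: "n > 0" using n2 by simp
  define P where "P = lpos n v"
  define R where "R = rpos n v"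
  define e where "e = R (1 + k)"
  have Pe: "P e = 1 + k" using lr_inv[OF n2] by (simp add: P_def e_def R_def)
  have one: "(1::nat) \<in> {1..n}" using n0 by simp
  have T1: "traj n (rho_shift n k v) 1 = 0"
    using traj_formula[OF n2 w g one] Pe n0 by (simp add: P_def e_def R_def)
  have Pr: "P (e - r) = P e - r" if r: "0 \<le> r" "r < int n" for r
  proof -
    define i where "i = (if r = 0 then 1 else nat (int n + 1 - r))"
    have i: "i \<in> {1..n}" using r by (auto simp: i_def)
    have ri: "(1 - int i) mod int n = r"
    proof (cases "r = 0")
      case True then show ?thesis by (simp add: i_def)
    next
      case False
      then have "1 - int i = r + (-1) * int n" using r by (simp add: i_def)
      then show ?thesis using r by (simp only: mod_mult_self1) simp
    qed
    have "int n * traj n (rho_shift n k v) i = 0" using const[OF i] T1 by simp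
    then show ?thesis using traj_formula[OF n2 w g i] ri Pe by (simp add: P_def e_def R_def)
  qed
  define d where "d = P e - e"
  have Ptr: "P p = p + d" for p
  proof -
    define r where "r = (e - p) mod int n"
    define z where "z = (e - p) div int n"
    have pz: "p = (e - r) + (- z) * int n" unfolding r_def z_def
      by (simp add: algebra_simps)
    have "P p = P (e - r) + (- z) * int n" by (subst pz) (simp only: P_def lpos_per)
    also have "\<dots> = P e - r + (- z) * int n" using Pr[of r] n0 by (simp add: r_def)
    finally show ?thesis using pz by (simp add: d_def)
  qed
  have Rtr: "R l = l - d" for l
    using Ptr[of "R l"] lr_inv[OF n2, of v l] by (simp add: P_def R_def)
  obtain x rest where v: "v = x # rest" using m by (cases v) auto
  have t1: "take 1 v = [x]" by (simp add: v)
  have rp1: "rpos n (take 1 v) = sw n x" unfolding t1 by (simp add: rpos_def)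
  define l1 where "l1 = int x"
  define l2 where "l2 = int x + 1"
  have s1: "sw n x l1 = l2" by (simp add: sw_def l1_def l2_def)
  have s2: "sw n x l2 = l1"
    using mod_succ_ne[OF n2, of "int x"] by (simp add: sw_def l1_def l2_def)
  have Rl: "R l1 < R l2" using Rtr by (simp add: l1_def l2_def)
  show ?thesis
  proof (cases "length v = 1")
    case True
    then have "take 1 v = v" by simp
    then have "R = sw n x" using rp1 by (simp add: R_def)
    then show ?thesis using Rl s1 s2 by (simp add: l1_def l2_def)
  next
    case False
    then have m2: "1 < length v" using m by simp
    have a: "lessdot n v u (cyl n (R l1)) (cyl n (R l2))"
      unfolding R_def by (rule cross[OF n2, of 0 1]) (use m rp1 s1 s2 in \<open>simp_all add: l1_def l2_def\<close>)
    have b: "lessdot n v u (cyl n (R l2)) (cyl n (R l1))"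
      unfolding R_def by (rule cross[OF n2, of 1 "length v"]) (use m2 rp1 s1 s2 Rl in \<open>simp_all add: l1_def l2_def R_def\<close>)
    show ?thesis using a b cyl_range[OF n0] by blast
  qed
qed

theorem proposition8p3:
  fixes n :: nat and u v :: "nat list" and k1 k2 :: int
    and \<alpha> :: "nat \<Rightarrow> real" and b c :: real and t' :: "nat \<Rightarrow> int"
  assumes n: "n \<ge> 3"
    and u_red: "reduced n u" and u_glide: "glide n u k1"
    and v_red: "reduced n v" and v_glide: "glide n v k2"
    and m: "length v \<ge> 1"
    and vu_red: "reduced n (v @ u)"
    and alpha: "\<And>i j. i \<in> {1..n} \<Longrightarrow> j \<in> {1..n} \<Longrightarrow> lessdot n v u i j \<Longrightarrow> \<alpha> i < \<alpha> j"
    and bc: "b > c"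
    and comp: "c \<in> connected_component_set (UNIV - \<alpha> ` {1..n}) b"
    and feq: "(\<Prod>j=1..n. b - \<alpha> j) = (\<Prod>j=1..n. c - \<alpha> j)"
    and rep: "\<exists>d::int. \<forall>i\<in>{1..n}. t' i = traj n (rho_shift n k2 v) i + d"
  shows "(\<Sum>j=1..n. real_of_int (t' j) * ln ((b - \<alpha> j) / (c - \<alpha> j))) < 0"
proof -
  have n2: "n \<ge> 2" using n by simp
  have w: "is_word n v" using v_red by (simp add: reduced_def)
  define T where "T i = traj n (rho_shift n k2 v) i" for i
  obtain d where d: "\<And>i. i \<in> {1..n} \<Longrightarrow> t' i = T i + d" using rep by (auto simp: T_def)
  define x where "x j = ln ((b - \<alpha> j) / (c - \<alpha> j))" for j
  define C where "C = connected_component_set (UNIV - \<alpha> ` {1..n}) b"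
  have sep: "\<alpha> j < c \<or> b < \<alpha> j" if j: "j \<in> {1..n}" for j
  proof (rule ccontr)
    assume "\<not> (\<alpha> j < c \<or> b < \<alpha> j)"
    then have aj: "\<alpha> j \<in> {c..b}" by auto
    have cC: "c \<in> C" using comp by (simp add: C_def)
    then have "C \<noteq> {}" by auto
    then have "b \<in> UNIV - \<alpha> ` {1..n}" unfolding C_def using connected_component_eq_empty by blast
    then have bC: "b \<in> C" unfolding C_def by (simp add: mem_Collect_eq)
    have "{c..b} \<subseteq> C" by (rule connected_contains_Icc) (use cC bC in \<open>simp_all add: C_def\<close>)
    then have "\<alpha> j \<in> C" using aj by auto
    then have "\<alpha> j \<in> UNIV - \<alpha> ` {1..n}" using connected_component_subset unfolding C_def by blast
    then show False using j by auto
  qed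
  have Bpos: "(b - \<alpha> j) / (c - \<alpha> j) > 0" if j: "j \<in> {1..n}" for j
    using sep[OF j] bc by (auto intro: divide_pos_pos divide_neg_neg)
  have xpos: "x j > 0" if "j \<in> {1..n}" "\<alpha> j < c" for j
  proof -
    have "(b - \<alpha> j) / (c - \<alpha> j) > 1" using that bc by (simp add: field_simps)
    then show ?thesis by (simp add: x_def)
  qed
  have xneg: "x j < 0" if "j \<in> {1..n}" "b < \<alpha> j" for j
  proof -
    have "(b - \<alpha> j) / (c - \<alpha> j) < 1" using that bc by (simp add: field_simps)
    then show ?thesis using Bpos[OF that(1)] by (simp add: x_def)
  qed
  have Bnz: "(b - \<alpha> j) / (c - \<alpha> j) \<noteq> 0" if "j \<in> {1..n}" for j
    using Bpos[OF that] by linarith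
  have sum0: "(\<Sum>j=1..n. x j) = 0"
  proof -
    have "c - \<alpha> j \<noteq> 0" if "j \<in> {1..n}" for j using sep[OF that] bc by auto
    then have nz: "(\<Prod>j=1..n. c - \<alpha> j) \<noteq> 0"
      by (simp add: prod_zero_iff)
    have "(\<Sum>j=1..n. x j) = ln (\<Prod>j=1..n. (b - \<alpha> j) / (c - \<alpha> j))"
      unfolding x_def by (rule ln_prod[symmetric]) (simp, rule Bnz)
    also have "(\<Prod>j=1..n. (b - \<alpha> j) / (c - \<alpha> j)) = 1"
      using nz feq by (simp add: prod_dividef)
    finally show ?thesis by simp
  qed
  define L where "L = {j \<in> {1..n}. \<alpha> j < c}"
  have LU: "T j \<le> T i" if "j \<in> L" "i \<in> {1..n}" "b < \<alpha> i" for i j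
  proof (rule ccontr)
    assume "\<not> T j \<le> T i"
    then have "T i < T j" by simp
    then have "lessdot n v u i j"
      using Bprime[OF n2 w v_glide m, of j i] that by (auto simp: T_def L_def)
    then have "\<alpha> i < \<alpha> j" using alpha that by (auto simp: L_def)
    then show False using that bc by (auto simp: L_def)
  qed
  have Lne: "L \<noteq> {}"
  proof
    assume "L = {}"
    then have "\<forall>j\<in>{1..n}. b < \<alpha> j" using sep by (auto simp: L_def)
    then have "(\<Sum>j=1..n. x j) < (\<Sum>j=1..n. (0::real))"
      using xneg n by (intro sum_strict_mono_ex1) (auto intro: bexI[of _ 1] less_imp_le)
    then show False using sum0 by simp
  qed
  have Lfin: "finite L" by (simp add: L_def)
  define Tm where "Tm = Max (T ` L)"
  have TL: "T j \<le> Tm" if "j \<in> L" for j using that Lfin by (simp add: Tm_def)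
  have TU: "Tm \<le> T i" if "i \<in> {1..n}" "b < \<alpha> i" for i
  proof -
    have "Tm \<in> T ` L" using Lfin Lne by (simp add: Tm_def)
    then obtain j where "j \<in> L" "Tm = T j" by auto
    then show ?thesis using LU that by simp
  qed
  have term_le: "real_of_int (T j - Tm) * x j \<le> 0" if j: "j \<in> {1..n}" for j
  proof (cases "\<alpha> j < c")
    case True
    then have "j \<in> L" using j by (simp add: L_def)
    then show ?thesis using TL xpos[OF j True] by (simp add: mult_nonpos_nonneg)
  next
    case False
    then have "b < \<alpha> j" using sep[OF j] by simp
    then show ?thesis using TU[OF j] xneg[OF j] by (simp add: mult_nonneg_nonpos)
  qed
  have nonconst: "\<exists>j\<in>{1..n}. T j \<noteq> Tm"
  proof (rule ccontr)
    assume "\<not> (\<exists>j\<in>{1..n}. T j \<noteq> Tm)"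
    then have "\<And>i. i \<in> {1..n} \<Longrightarrow> traj n (rho_shift n k2 v) i = traj n (rho_shift n k2 v) 1"
      using n by (auto simp: T_def)
    then obtain a a' where "a \<in> {1..n}" "a' \<in> {1..n}" "lessdot n v u a a'" "lessdot n v u a' a"
      using Aprime[OF n2 w v_glide m] by blast
    then have "\<alpha> a < \<alpha> a'" "\<alpha> a' < \<alpha> a" using alpha by auto
    then show False by simp
  qed
  have term_lt: "\<exists>j\<in>{1..n}. real_of_int (T j - Tm) * x j < 0"
  proof -
    obtain j where j: "j \<in> {1..n}" "T j \<noteq> Tm" using nonconst by blast
    show ?thesis
    proof (cases "\<alpha> j < c")
      case True
      then have "j \<in> L" using j by (simp add: L_def)
      then have "T j < Tm" using TL j by (simp add: order_le_neq_trans)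
      then show ?thesis using xpos[OF j(1) True] j by (intro bexI[of _ j]) (simp_all add: mult_neg_pos)
    next
      case False
      then have bj: "b < \<alpha> j" using sep[OF j(1)] by simp
      then have "Tm < T j" using TU[OF j(1) bj] j by simp
      then show ?thesis using xneg[OF j(1) bj] j by (intro bexI[of _ j]) (simp_all add: mult_pos_neg)
    qed
  qed
  have "(\<Sum>j=1..n. real_of_int (t' j) * x j)
        = (\<Sum>j=1..n. real_of_int (T j - Tm) * x j + real_of_int (Tm + d) * x j)"
    by (rule sum.cong) (simp_all add: d algebra_simps)
  also have "\<dots> = (\<Sum>j=1..n. real_of_int (T j - Tm) * x j) + real_of_int (Tm + d) * (\<Sum>j=1..n. x j)"
    by (simp add: sum.distrib sum_distrib_left)
  also have "\<dots> = (\<Sum>j=1..n. real_of_int (T j - Tm) * x j)" using sum0 by simp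
  also have "\<dots> < (\<Sum>j=1..n. (0::real))"
    by (rule sum_strict_mono_ex1) (use term_le term_lt in auto)
  finally show ?thesis by (simp add: x_def)
qed

end
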